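(* Let $G=(V,E)$ be an internally vertex-color-avoiding connected graph on $n$ vertices such that $G-e$ is not internally vertex-color-avoiding connected for any $e\in E$, and suppose the vertices are colored with exactly $k$ colors. If $k=1$, then $|E|=\binom{n}{2}$; if $k\ge 2$, then $|E|\le 2n-3$. Moreover, if $k\in\{2,3\}$, this upper bound is sharp (attained by suitable such graphs).
   Context: Vertex-colorings are arbitrary (not necessarily proper). Two vertices $u,v$ are internally vertex-$c$-avoiding connected (for a color $c$) if some $u$-$v$ path contains no internal vertex of color $c$. A graph is internally vertex-color-avoiding connected if any two vertices are internally vertex-$c$-avoiding connected for every color $c$. $G-e$ denotes $G$ with edge $e$ removed. *)

theory Defs
  imports Main
begin

definition simple_graph :: "'a set \<Rightarrow> 'a set set \<Rightarrow> bool" where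
  "simple_graph V E \<longleftrightarrow> finite V \<and> (\<forall>e\<in>E. e \<subseteq> V \<and> card e = 2)"

definition is_path :: "'a set \<Rightarrow> 'a set set \<Rightarrow> 'a list \<Rightarrow> 'a \<Rightarrow> 'a \<Rightarrow> bool" where
  "is_path V E p u v \<longleftrightarrow> p \<noteq> [] \<and> hd p = u \<and> last p = v \<and> distinct p \<and> set p \<subseteq> V \<and>
     (\<forall>i. Suc i < length p \<longrightarrow> {p ! i, p ! Suc i} \<in> E)"

definition internal_vertices :: "'a list \<Rightarrow> 'a set" where
  "internal_vertices p = set (butlast (tl p))"

definition int_vertex_avoiding_conn ::
  "'a set \<Rightarrow> 'a set set \<Rightarrow> ('a \<Rightarrow> 'b) \<Rightarrow> 'b \<Rightarrow> 'a \<Rightarrow> 'a \<Rightarrow> bool" where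
  "int_vertex_avoiding_conn V E col c u v \<longleftrightarrow>
     (\<exists>p. is_path V E p u v \<and> (\<forall>w\<in>internal_vertices p. col w \<noteq> c))"

definition int_vertex_color_avoiding_connected ::
  "'a set \<Rightarrow> 'a set set \<Rightarrow> ('a \<Rightarrow> 'b) \<Rightarrow> bool" where
  "int_vertex_color_avoiding_connected V E col \<longleftrightarrow>
     (\<forall>c\<in>col ` V. \<forall>u\<in>V. \<forall>v\<in>V. int_vertex_avoiding_conn V E col c u v)"

definition minimal_ICAC :: "'a set \<Rightarrow> 'a set set \<Rightarrow> ('a \<Rightarrow> 'b) \<Rightarrow> bool" where
  "minimal_ICAC V E col \<longleftrightarrow> int_vertex_color_avoiding_connected V E col \<and>
     (\<forall>e\<in>E. \<not> int_vertex_color_avoiding_connected V (E - {e}) col)"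

end

theory Submission
  imports Defs "HOL-Library.Transitive_Closure_Table"
begin

lemma succ_nth: "successively P xs \<longleftrightarrow> (\<forall>i. Suc i < length xs \<longrightarrow> P (xs!i) (xs!Suc i))"
proof (induction xs)
  case (Cons x xs)
  show ?case
  proof (cases xs)
    case (Cons y ys)
    have "(\<forall>i. Suc i < length (x#xs) \<longrightarrow> P ((x#xs)!i) ((x#xs)!Suc i)) \<longleftrightarrow>
          P x y \<and> (\<forall>i. Suc i < length xs \<longrightarrow> P (xs!i) (xs!Suc i))"
    proof
      assume h: "\<forall>i. Suc i < length (x#xs) \<longrightarrow> P ((x#xs)!i) ((x#xs)!Suc i)"
      have "P x y" using h[rule_format, of 0] Cons by simp
      moreover have "\<forall>i. Suc i < length xs \<longrightarrow> P (xs!i) (xs!Suc i)"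
      proof (intro allI impI)
        fix i assume "Suc i < length xs"
        then show "P (xs!i) (xs!Suc i)" using h[rule_format, of "Suc i"] by simp
      qed
      ultimately show "P x y \<and> (\<forall>i. Suc i < length xs \<longrightarrow> P (xs!i) (xs!Suc i))" by blast
    next
      assume h: "P x y \<and> (\<forall>i. Suc i < length xs \<longrightarrow> P (xs!i) (xs!Suc i))"
      show "\<forall>i. Suc i < length (x#xs) \<longrightarrow> P ((x#xs)!i) ((x#xs)!Suc i)"
      proof (intro allI impI)
        fix i assume i: "Suc i < length (x#xs)"
        show "P ((x#xs)!i) ((x#xs)!Suc i)"
        proof (cases i)
          case 0 then show ?thesis using h Cons by simp
        next
          case (Suc j) then show ?thesis using h i by simp
        qed
      qed
    qed
    then show ?thesis using Cons.IH by (simp add: Cons)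
  qed simp
qed simp


definition Wc :: "'a set \<Rightarrow> ('a \<Rightarrow> 'b) \<Rightarrow> 'b \<Rightarrow> 'a set" where
  "Wc V col c = {v\<in>V. col v \<noteq> c}"
definition adjp :: "'a set set \<Rightarrow> 'a set \<Rightarrow> 'a \<Rightarrow> 'a \<Rightarrow> bool" where
  "adjp F A x y \<longleftrightarrow> x \<in> A \<and> y \<in> A \<and> {x,y} \<in> F"
definition cl :: "'a set set \<Rightarrow> 'a set \<Rightarrow> 'a \<Rightarrow> 'a set" where
  "cl F A x = {y. (adjp F A)\<^sup>*\<^sup>* x y}"
definition ncomp :: "'a set set \<Rightarrow> 'a set \<Rightarrow> nat" where
  "ncomp F A = card (cl F A ` A)"
definition lackset :: "'a set \<Rightarrow> 'a set set \<Rightarrow> ('a \<Rightarrow> 'b) \<Rightarrow> 'b \<Rightarrow> 'a set" where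
  "lackset V F col c = {x\<in>V. col x = c \<and> \<not>(\<exists>w\<in>V. col w \<noteq> c \<and> {x,w} \<in> F)}"
definition kap :: "'a set \<Rightarrow> 'a set set \<Rightarrow> ('a \<Rightarrow> 'b) \<Rightarrow> 'b \<Rightarrow> nat" where
  "kap V F col c = ncomp F (Wc V col c) + card (lackset V F col c)"
definition Sk :: "'a set \<Rightarrow> 'a set set \<Rightarrow> ('a \<Rightarrow> 'b) \<Rightarrow> nat" where
  "Sk V F col = (\<Sum>c\<in>col ` V. kap V F col c)"
definition isol :: "'a set set \<Rightarrow> 'a \<Rightarrow> bool" where
  "isol F y \<longleftrightarrow> (\<forall>e\<in>F. y \<notin> e)"

lemma adjp_mono: "F \<subseteq> F' \<Longrightarrow> (adjp F A)\<^sup>*\<^sup>* x y \<Longrightarrow> (adjp F' A)\<^sup>*\<^sup>* x y"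
proof -
  assume "F \<subseteq> F'"
  then have "adjp F A \<le> adjp F' A" by (auto simp: adjp_def)
  then show "(adjp F A)\<^sup>*\<^sup>* x y \<Longrightarrow> (adjp F' A)\<^sup>*\<^sup>* x y"
    using rtranclp_mono by blast
qed

lemma cl_h:
  assumes "F \<subseteq> F'" "x \<in> A"
  shows "\<Union> (cl F' A ` (cl F A x \<inter> A)) = cl F' A x"
proof
  show "\<Union> (cl F' A ` (cl F A x \<inter> A)) \<subseteq> cl F' A x"
  proof
    fix z assume "z \<in> \<Union> (cl F' A ` (cl F A x \<inter> A))"
    then obtain y where y: "y \<in> cl F A x" "z \<in> cl F' A y" by auto
    then have "(adjp F' A)\<^sup>*\<^sup>* x y" using adjp_mono[OF assms(1)] by (auto simp: cl_def)
    with y(2) show "z \<in> cl F' A x" by (auto simp: cl_def)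
  qed
next
  have "x \<in> cl F A x \<inter> A" using assms(2) by (auto simp: cl_def)
  then show "cl F' A x \<subseteq> \<Union> (cl F' A ` (cl F A x \<inter> A))" by blast
qed

lemma ncomp_img:
  assumes "F \<subseteq> F'"
  shows "cl F' A ` A = (\<lambda>S. \<Union> (cl F' A ` (S \<inter> A))) ` (cl F A ` A)"
  using cl_h[OF assms] by (simp add: image_image)

lemma ncomp_mono:
  assumes "finite A" "F \<subseteq> F'"
  shows "ncomp F' A \<le> ncomp F A"
  unfolding ncomp_def ncomp_img[OF assms(2)]
  using assms(1) by (intro card_image_le) simp

lemma ncomp_strict:
  assumes "finite A" "F \<subseteq> F'" "x \<in> A" "y \<in> A" "{x,y} \<in> F'" "\<not> (adjp F A)\<^sup>*\<^sup>* x y"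
  shows "ncomp F' A < ncomp F A"
proof -
  let ?h = "\<lambda>S. \<Union> (cl F' A ` (S \<inter> A))"
  have fin: "finite (cl F A ` A)" using assms(1) by simp
  have "adjp F' A x y" "adjp F' A y x" using assms by (auto simp: adjp_def insert_commute)
  then have "cl F' A x = cl F' A y"
    unfolding cl_def
    by (auto intro: converse_rtranclp_into_rtranclp)
  then have eq: "?h (cl F A x) = ?h (cl F A y)" using cl_h[OF assms(2)] assms(3,4) by simp
  have ne: "cl F A x \<noteq> cl F A y"
  proof
    assume h: "cl F A x = cl F A y"
    have "y \<in> cl F A y" by (simp add: cl_def)
    then have "y \<in> cl F A x" using h by simp
    then show False using assms(6) by (simp add: cl_def)
  qed
  have "\<not> inj_on ?h (cl F A ` A)"
    using eq ne assms(3,4) unfolding inj_on_def by blast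
  then have "card (?h ` (cl F A ` A)) \<noteq> card (cl F A ` A)"
    using inj_on_iff_eq_card[OF fin] by blast
  moreover have "card (?h ` (cl F A ` A)) \<le> card (cl F A ` A)" using fin by (rule card_image_le)
  ultimately show ?thesis unfolding ncomp_def ncomp_img[OF assms(2)] by simp
qed

lemma lack_mono: "F \<subseteq> F' \<Longrightarrow> lackset V F' col c \<subseteq> lackset V F col c"
  by (auto simp: lackset_def)

lemma kap_mono:
  assumes "finite V" "F \<subseteq> F'"
  shows "kap V F' col c \<le> kap V F col c"
proof -
  have "ncomp F' (Wc V col c) \<le> ncomp F (Wc V col c)"
    using assms by (intro ncomp_mono) (auto simp: Wc_def)
  moreover have "card (lackset V F' col c) \<le> card (lackset V F col c)"
    using assms lack_mono[OF assms(2)] by (intro card_mono) (auto simp: lackset_def)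
  ultimately show ?thesis by (simp add: kap_def)
qed

lemma kap_strict_a:
  assumes "finite V" "F \<subseteq> F'" "x \<in> Wc V col c" "y \<in> Wc V col c" "{x,y} \<in> F'"
    "\<not> (adjp F (Wc V col c))\<^sup>*\<^sup>* x y"
  shows "kap V F' col c < kap V F col c"
proof -
  have "ncomp F' (Wc V col c) < ncomp F (Wc V col c)"
    using assms by (intro ncomp_strict) (auto simp: Wc_def)
  moreover have "card (lackset V F' col c) \<le> card (lackset V F col c)"
    using assms lack_mono[OF assms(2)] by (intro card_mono) (auto simp: lackset_def)
  ultimately show ?thesis by (simp add: kap_def)
qed

lemma kap_strict_b:
  assumes "finite V" "F \<subseteq> F'" "x \<in> lackset V F col c" "y \<in> V" "col y \<noteq> c" "{x,y} \<in> F'"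
  shows "kap V F' col c < kap V F col c"
proof -
  have "ncomp F' (Wc V col c) \<le> ncomp F (Wc V col c)"
    using assms by (intro ncomp_mono) (auto simp: Wc_def)
  moreover have "lackset V F' col c \<subset> lackset V F col c"
    using assms lack_mono[OF assms(2)] by (auto simp: lackset_def)
  then have "card (lackset V F' col c) < card (lackset V F col c)"
    using assms(1) by (intro psubset_card_mono) (auto simp: lackset_def)
  ultimately show ?thesis by (simp add: kap_def)
qed

lemma Sk_strict:
  assumes "finite V" "F \<subseteq> F'" "c \<in> col ` V" "kap V F' col c < kap V F col c"
  shows "Sk V F' col < Sk V F col"
  unfolding Sk_def
  using assms kap_mono[OF assms(1,2)] by (intro sum_strict_mono_ex1) auto

lemma iso_not_reach:
  assumes "isol F y" "x \<noteq> y"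
  shows "\<not> (adjp F A)\<^sup>*\<^sup>* x y"
proof
  assume "(adjp F A)\<^sup>*\<^sup>* x y"
  then show False
  proof (cases rule: rtranclp.cases)
    case rtrancl_refl then show ?thesis using assms by simp
  next
    case (rtrancl_into_rtrancl b)
    then show ?thesis using assms(1) by (auto simp: adjp_def isol_def)
  qed
qed

lemma kap_strict_iso:
  assumes "finite V" "isol F y" "x \<in> V" "y \<in> V" "x \<noteq> y" "c \<noteq> col x"
  shows "kap V (insert {x,y} F) col c < kap V F col c"
proof (cases "col y = c")
  case True
  have "y \<in> lackset V F col c" using assms True by (auto simp: lackset_def isol_def)
  then show ?thesis using assms
    by (intro kap_strict_b[where x=y and y=x]) (auto simp: insert_commute)
next
  case False
  then show ?thesis using assms iso_not_reach[OF assms(2,5)]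
    by (intro kap_strict_a[where x=x and y=y]) (auto simp: Wc_def)
qed

lemma Sk_step_iso:
  assumes "finite V" "isol F y" "x \<in> V" "y \<in> V" "x \<noteq> y"
  shows "Sk V (insert {x,y} F) col + (card (col ` V) - 1) \<le> Sk V F col"
proof -
  let ?F' = "insert {x,y} F"
  have "(\<Sum>c\<in>col ` V. kap V ?F' col c + (if c = col x then 0 else 1)) \<le> (\<Sum>c\<in>col ` V. kap V F col c)"
  proof (rule sum_mono)
    fix c assume "c \<in> col ` V"
    show "kap V ?F' col c + (if c = col x then 0 else 1) \<le> kap V F col c"
      using kap_mono[OF assms(1), of F ?F' col c] kap_strict_iso[OF assms, of c col] by auto
  qed
  moreover have "(\<Sum>c\<in>col ` V. (if c = col x then 0 else 1::nat)) = card (col ` V) - 1"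
  proof -
    have "(\<Sum>c\<in>col ` V. (if c = col x then 0 else 1::nat)) = card (col ` V - {col x})"
      using assms(1) by (simp add: sum.If_cases Diff_eq)
    also have "\<dots> = card (col ` V) - 1" using assms(1,3) by simp
    finally show ?thesis .
  qed
  ultimately show ?thesis by (simp add: sum.distrib Sk_def)
qed

lemma Sk_first:
  assumes "finite V" "s \<in> V" "t \<in> V" "col s \<noteq> col t"
  shows "Sk V {{s,t}} col + card (col ` V) \<le> Sk V {} col"
proof -
  have st: "s \<noteq> t" using assms by auto
  have "(\<Sum>c\<in>col ` V. kap V {{s,t}} col c + 1) \<le> (\<Sum>c\<in>col ` V. kap V {} col c)"
  proof (rule sum_mono)
    fix c assume "c \<in> col ` V"
    show "kap V {{s,t}} col c + 1 \<le> kap V {} col c"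
    proof (cases "c = col s")
      case True
      have "s \<in> lackset V {} col c" using True assms by (auto simp: lackset_def)
      then have "kap V {{s,t}} col c < kap V {} col c"
        using assms True by (intro kap_strict_b[where x=s and y=t]) auto
      then show ?thesis by simp
    next
      case False
      have "kap V (insert {s,t} {}) col c < kap V {} col c"
        using assms st False by (intro kap_strict_iso) (auto simp: isol_def)
      then show ?thesis by simp
    qed
  qed
  moreover have "(\<Sum>c\<in>col ` V. kap V {{s,t}} col c + 1) = (\<Sum>c\<in>col ` V. kap V {{s,t}} col c) + (\<Sum>c\<in>col ` V. 1)"
    by (rule sum.distrib)
  ultimately show ?thesis by (simp add: Sk_def)
qed

lemma Sk_empty:
  assumes "finite V"
  shows "Sk V {} col \<le> card (col ` V) * card V"
proof -
  have "kap V {} col c \<le> card V" for c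
  proof -
    have "ncomp {} (Wc V col c) \<le> card (Wc V col c)"
      unfolding ncomp_def using assms by (intro card_image_le) (auto simp: Wc_def)
    moreover have "lackset V {} col c \<subseteq> V - Wc V col c" by (auto simp: lackset_def Wc_def)
    then have "card (lackset V {} col c) \<le> card (V - Wc V col c)" using assms by (intro card_mono) auto
    moreover have "card (V - Wc V col c) = card V - card (Wc V col c)"
      using assms by (intro card_Diff_subset) (auto simp: Wc_def)
    moreover have "card (Wc V col c) \<le> card V" using assms by (intro card_mono) (auto simp: Wc_def)
    ultimately show ?thesis by (simp add: kap_def)
  qed
  then show ?thesis unfolding Sk_def using sum_bounded_above[of "col ` V" "kap V {} col" "card V"]
    by simp
qed

lemma Sk_lower:
  assumes "finite V" "\<And>c. c \<in> col ` V \<Longrightarrow> Wc V col c \<noteq> {}"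
  shows "card (col ` V) \<le> Sk V F col"
proof -
  have "(\<Sum>c\<in>col ` V. (1::nat)) \<le> (\<Sum>c\<in>col ` V. kap V F col c)"
  proof (rule sum_mono)
    fix c assume c: "c \<in> col ` V"
    have "finite (cl F (Wc V col c) ` Wc V col c)" using assms(1) by (simp add: Wc_def)
    moreover have "cl F (Wc V col c) ` Wc V col c \<noteq> {}" using assms(2)[OF c] by simp
    ultimately have "1 \<le> ncomp F (Wc V col c)" unfolding ncomp_def
      by (simp add: Suc_le_eq card_gt_0_iff)
    then show "1 \<le> kap V F col c" by (simp add: kap_def)
  qed
  then show ?thesis by (simp add: Sk_def)
qed

lemma is_path_succ: "is_path V E p u v \<longleftrightarrow> p \<noteq> [] \<and> hd p = u \<and> last p = v \<and> distinct p \<and> set p \<subseteq> V \<and>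
   successively (\<lambda>x y. {x,y} \<in> E) p"
  by (simp add: is_path_def succ_nth)

lemma set_path_split:
  assumes "p \<noteq> []"
  shows "set p \<subseteq> insert (hd p) (insert (last p) (internal_vertices p))"
proof (cases p)
  case (Cons a t)
  show ?thesis
  proof (cases "t = []")
    case True then show ?thesis using Cons by simp
  next
    case False
    then have "set t = set (butlast t) \<union> {last t}"
      by (metis append_butlast_last_id set_append empty_set list.simps(15) Un_insert_right sup_bot.right_neutral)
    then show ?thesis using Cons False by (auto simp: internal_vertices_def)
  qed
qed (use assms in simp)

lemma internal_sub: "internal_vertices p \<subseteq> set p"
  unfolding internal_vertices_def by (cases p) (auto dest: in_set_butlastD)

lemma internal_not_ends:
  assumes "distinct p" "z \<in> internal_vertices p"
  shows "z \<noteq> hd p \<and> z \<noteq> last p"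
proof (cases p)
  case Nil then show ?thesis using assms by (simp add: internal_vertices_def)
next
  case (Cons a t)
  have zt: "z \<in> set (butlast t)" using assms Cons by (simp add: internal_vertices_def)
  then have tne: "t \<noteq> []" by auto
  have "z \<noteq> a" using zt assms Cons by (auto dest: in_set_butlastD)
  moreover have "distinct (butlast t @ [last t])" using assms Cons tne by simp
  then have "last t \<notin> set (butlast t)" by simp
  then have "z \<noteq> last t" using zt by auto
  ultimately show ?thesis using Cons tne by simp
qed

lemma path_second:
  assumes "is_path V E p u v" "u \<noteq> v"
  shows "\<exists>y. {u,y} \<in> E \<and> y \<in> V \<and> (y = v \<or> y \<in> internal_vertices p)"
proof -
  obtain t where p: "p = u # t" using assms unfolding is_path_def by (cases p) auto
  have "t \<noteq> []" using assms p unfolding is_path_def by auto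
  then obtain y rest where t: "t = y # rest" by (cases t) auto
  have "Suc 0 < length p" using p t by simp
  then have "{p!0, p!Suc 0} \<in> E" using assms(1) unfolding is_path_def by blast
  then have "{u,y} \<in> E" using p t by simp
  moreover have "y \<in> V" using assms p t unfolding is_path_def by auto
  moreover have "y = v \<or> y \<in> internal_vertices p"
  proof (cases rest)
    case Nil then show ?thesis using assms p t unfolding is_path_def by simp
  next
    case (Cons a b) then show ?thesis using p t by (simp add: internal_vertices_def)
  qed
  ultimately show ?thesis by blast
qed

lemma ICAC_nbr:
  assumes "int_vertex_color_avoiding_connected V E col" "x \<in> V" "w \<in> V" "col w \<noteq> col x"
  shows "\<exists>y\<in>V. col y \<noteq> col x \<and> {x,y} \<in> E"
proof -
  obtain p where p: "is_path V E p x w" "\<forall>z\<in>internal_vertices p. col z \<noteq> col x"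
    using assms unfolding int_vertex_color_avoiding_connected_def int_vertex_avoiding_conn_def by blast
  have "x \<noteq> w" using assms by auto
  then obtain y where "{x,y} \<in> E" "y \<in> V" "y = w \<or> y \<in> internal_vertices p"
    using path_second[OF p(1)] by blast
  then show ?thesis using p(2) assms(4) by blast
qed

lemma list_cross:
  "p \<noteq> [] \<Longrightarrow> hd p \<in> R \<Longrightarrow> last p \<notin> R \<Longrightarrow> \<exists>i. Suc i < length p \<and> p!i \<in> R \<and> p!Suc i \<notin> R"
proof (induction p)
  case (Cons a t)
  then have tne: "t \<noteq> []" by auto
  show ?case
  proof (cases "hd t \<in> R")
    case True
    then obtain i where "Suc i < length t" "t!i \<in> R" "t!Suc i \<notin> R" using Cons tne by auto
    then show ?thesis by (intro exI[of _ "Suc i"]) simp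
  next
    case False
    then show ?thesis using Cons tne by (intro exI[of _ 0]) (simp add: hd_conv_nth)
  qed
qed simp

lemma ICAC_cross:
  assumes "int_vertex_color_avoiding_connected V E col" "s \<in> V" "y \<in> V" "s \<in> R" "y \<notin> R"
  shows "\<exists>a b. a \<in> R \<and> b \<in> V \<and> b \<notin> R \<and> {a,b} \<in> E"
proof -
  obtain p where p: "is_path V E p s y"
    using assms unfolding int_vertex_color_avoiding_connected_def int_vertex_avoiding_conn_def by blast
  then obtain i where i: "Suc i < length p" "p!i \<in> R" "p!Suc i \<notin> R"
    using list_cross[of p R] assms unfolding is_path_def by auto
  moreover have "p!Suc i \<in> V" using p i unfolding is_path_def by (meson nth_mem subsetD)
  moreover have "{p!i, p!Suc i} \<in> E" using p i unfolding is_path_def by blast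
  ultimately show ?thesis by blast
qed

lemma chain_reach:
  "p \<noteq> [] \<Longrightarrow> (\<forall>i. Suc i < length p \<longrightarrow> Q\<^sup>*\<^sup>* (p!i) (p!Suc i)) \<Longrightarrow> Q\<^sup>*\<^sup>* (hd p) (last p)"
proof (induction p)
  case (Cons a t)
  show ?case
  proof (cases t)
    case Nil then show ?thesis by simp
  next
    case (Cons b r)
    have "Q\<^sup>*\<^sup>* a b" using Cons.prems(2)[rule_format, of 0] Cons by simp
    moreover have "\<forall>i. Suc i < length t \<longrightarrow> Q\<^sup>*\<^sup>* (t!i) (t!Suc i)"
    proof (intro allI impI)
      fix i assume "Suc i < length t"
      then show "Q\<^sup>*\<^sup>* (t!i) (t!Suc i)" using Cons.prems(2)[rule_format, of "Suc i"] by simp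
    qed
    then have "Q\<^sup>*\<^sup>* (hd t) (last t)" using Cons.IH Cons by simp
    ultimately show ?thesis using Cons by simp
  qed
qed simp

lemma caseB_a:
  assumes "int_vertex_color_avoiding_connected V E col" "c \<in> col ` V"
    "p0 \<in> Wc V col c" "q0 \<in> Wc V col c" "\<not> (adjp F (Wc V col c))\<^sup>*\<^sup>* p0 q0"
  shows "\<exists>x y. x \<in> Wc V col c \<and> y \<in> Wc V col c \<and> {x,y} \<in> E \<and> \<not> (adjp F (Wc V col c))\<^sup>*\<^sup>* x y"
proof (rule ccontr)
  assume nex: "\<not> ?thesis"
  have "p0 \<in> V" "q0 \<in> V" using assms by (auto simp: Wc_def)
  then obtain p where p: "is_path V E p p0 q0" "\<forall>z\<in>internal_vertices p. col z \<noteq> c"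
    using assms unfolding int_vertex_color_avoiding_connected_def int_vertex_avoiding_conn_def by blast
  have sp: "set p \<subseteq> Wc V col c"
  proof
    fix z assume z: "z \<in> set p"
    then have "z \<in> V" using p unfolding is_path_def by auto
    moreover have "z = p0 \<or> z = q0 \<or> z \<in> internal_vertices p"
      using set_path_split[of p] p z unfolding is_path_def by auto
    ultimately show "z \<in> Wc V col c" using assms(3,4) p(2) by (auto simp: Wc_def)
  qed
  have "\<forall>i. Suc i < length p \<longrightarrow> (adjp F (Wc V col c))\<^sup>*\<^sup>* (p!i) (p!Suc i)"
  proof (intro allI impI)
    fix i assume i: "Suc i < length p"
    have "p!i \<in> Wc V col c" "p!Suc i \<in> Wc V col c" using sp i by auto
    moreover have "{p!i, p!Suc i} \<in> E" using p i unfolding is_path_def by blast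
    ultimately show "(adjp F (Wc V col c))\<^sup>*\<^sup>* (p!i) (p!Suc i)" using nex by blast
  qed
  then have "(adjp F (Wc V col c))\<^sup>*\<^sup>* (hd p) (last p)" using p chain_reach unfolding is_path_def by blast
  then show False using p assms(5) unfolding is_path_def by simp
qed

lemma ICAC_mono:
  assumes "int_vertex_color_avoiding_connected V F col" "F \<subseteq> F'"
  shows "int_vertex_color_avoiding_connected V F' col"
  unfolding int_vertex_color_avoiding_connected_def int_vertex_avoiding_conn_def
proof (intro ballI)
  fix c u v assume h: "c \<in> col ` V" "u \<in> V" "v \<in> V"
  then obtain p where "is_path V F p u v" "\<forall>w\<in>internal_vertices p. col w \<noteq> c"
    using assms(1) unfolding int_vertex_color_avoiding_connected_def int_vertex_avoiding_conn_def by blast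
  moreover then have "is_path V F' p u v" using assms(2) unfolding is_path_def by blast
  ultimately show "\<exists>p. is_path V F' p u v \<and> (\<forall>w\<in>internal_vertices p. col w \<noteq> c)" by blast
qed

lemma rp_props:
  "rtrancl_path (adjp F A) a xs b \<Longrightarrow> last (a#xs) = b \<and> successively (\<lambda>x y. {x,y} \<in> F) (a#xs) \<and> set xs \<subseteq> A"
proof (induction rule: rtrancl_path.induct)
  case (base x) then show ?case by simp
next
  case (step x y ys z)
  then show ?case by (auto simp: adjp_def)
qed

lemma reach_path:
  assumes "(adjp F A)\<^sup>*\<^sup>* a b" "a \<in> A"
  shows "\<exists>m. m \<noteq> [] \<and> hd m = a \<and> last m = b \<and> distinct m \<and> set m \<subseteq> A \<and> successively (\<lambda>x y. {x,y} \<in> F) m"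
proof -
  obtain xs where "rtrancl_path (adjp F A) a xs b" using assms(1) rtranclp_eq_rtrancl_path by metis
  then obtain xs' where xs': "rtrancl_path (adjp F A) a xs' b" "distinct (a # xs')"
    by (rule rtrancl_path_distinct)
  show ?thesis using rp_props[OF xs'(1)] xs'(2) assms(2) by (intro exI[of _ "a#xs'"]) auto
qed

lemma ICAC_suff:
  assumes "\<And>c. c \<in> col ` V \<Longrightarrow> (\<forall>p\<in>Wc V col c. \<forall>q\<in>Wc V col c. (adjp F (Wc V col c))\<^sup>*\<^sup>* p q)
                                     \<and> lackset V F col c = {}"
  shows "int_vertex_color_avoiding_connected V F col"
  unfolding int_vertex_color_avoiding_connected_def int_vertex_avoiding_conn_def
proof (intro ballI)
  fix c u v assume c: "c \<in> col ` V" and uv: "u \<in> V" "v \<in> V"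
  let ?W = "Wc V col c"
  show "\<exists>p. is_path V F p u v \<and> (\<forall>w\<in>internal_vertices p. col w \<noteq> c)"
  proof (cases "u = v")
    case True
    then show ?thesis using uv by (intro exI[of _ "[u]"]) (simp add: is_path_def internal_vertices_def)
  next
    case False
    have lk: "lackset V F col c = {}" and rch: "\<forall>p\<in>?W. \<forall>q\<in>?W. (adjp F ?W)\<^sup>*\<^sup>* p q" using assms[OF c] by auto
    obtain a where a: "a \<in> ?W" "col u \<noteq> c \<longrightarrow> a = u" "col u = c \<longrightarrow> {u,a} \<in> F"
    proof (cases "col u = c")
      case True
      then have "u \<notin> lackset V F col c" using lk by simp
      then obtain w where "w \<in> V" "col w \<noteq> c" "{u,w} \<in> F" using uv True by (auto simp: lackset_def)
      then show ?thesis using that True by (auto simp: Wc_def)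
    next
      case False then show ?thesis using that uv by (auto simp: Wc_def)
    qed
    obtain b where b: "b \<in> ?W" "col v \<noteq> c \<longrightarrow> b = v" "col v = c \<longrightarrow> {b,v} \<in> F"
    proof (cases "col v = c")
      case True
      then have "v \<notin> lackset V F col c" using lk by simp
      then obtain w where "w \<in> V" "col w \<noteq> c" "{v,w} \<in> F" using uv True by (auto simp: lackset_def)
      then show ?thesis using that True by (auto simp: Wc_def insert_commute)
    next
      case False then show ?thesis using that uv by (auto simp: Wc_def)
    qed
    obtain m where m: "m \<noteq> []" "hd m = a" "last m = b" "distinct m" "set m \<subseteq> ?W"
      "successively (\<lambda>x y. {x,y} \<in> F) m"
      using reach_path[of F ?W a b] rch a(1) b(1) by blast
    define pre where "pre = (if col u = c then [u] else [])"
    define post where "post = (if col v = c then [v] else [])"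
    define p where "p = pre @ m @ post"
    have Wsub: "?W \<subseteq> V" by (auto simp: Wc_def)
    have hd: "hd p = u" using m a unfolding p_def pre_def by auto
    have lst: "last p = v" using m b unfolding p_def post_def by auto
    have ne: "p \<noteq> []" using m unfolding p_def by simp
    have dist: "distinct p"
      using m False unfolding p_def pre_def post_def by (auto simp: Wc_def)
    have sv: "set p \<subseteq> V" using m uv Wsub unfolding p_def pre_def post_def by auto
    have "successively (\<lambda>x y. {x,y} \<in> F) (m @ post)"
      using m b unfolding post_def by (auto simp: successively_append_iff)
    then have sc: "successively (\<lambda>x y. {x,y} \<in> F) p"
      using m a unfolding p_def pre_def by (auto simp: successively_append_iff)
    have "is_path V F p u v" using hd lst ne dist sv sc by (simp add: is_path_succ)
    moreover have "\<forall>w\<in>internal_vertices p. col w \<noteq> c"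
    proof
      fix w assume w: "w \<in> internal_vertices p"
      then have "w \<noteq> u" "w \<noteq> v" using internal_not_ends[OF dist w] hd lst by auto
      moreover have "w \<in> set p" using internal_sub[of p] w by (rule subsetD)
      ultimately have "w \<in> set m" unfolding p_def pre_def post_def by (auto split: if_splits)
      then show "col w \<noteq> c" using m by (auto simp: Wc_def)
    qed
    ultimately show ?thesis by blast
  qed
qed

lemma Wc_ne:
  assumes "2 \<le> card (col ` V)" "c \<in> col ` V"
  shows "Wc V col c \<noteq> {}"
proof
  assume "Wc V col c = {}"
  then have "col ` V \<subseteq> {c}" by (auto simp: Wc_def)
  then have "card (col ` V) \<le> 1" using card_mono[of "{c}" "col ` V"] by simp
  then show False using assms by simp
qed

lemma main_ind:
  assumes fin: "finite V" and fe: "finite E" and icac: "int_vertex_color_avoiding_connected V E col"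
    and k2: "2 \<le> card (col ` V)" and sV: "s \<in> V"
  shows "Sk V F col = m \<Longrightarrow> F \<subseteq> E \<Longrightarrow> R \<subseteq> V \<Longrightarrow> s \<in> R \<Longrightarrow> (\<forall>y\<in>V-R. isol F y) \<Longrightarrow>
    card F + Sk V F col + (card (col ` V) - 2) * card R \<le> B \<Longrightarrow>
    \<exists>F'. F' \<subseteq> E \<and> int_vertex_color_avoiding_connected V F' col \<and>
         card F' + card (col ` V) + (card (col ` V) - 2) * card V \<le> B"
proof (induction m arbitrary: F R rule: less_induct)
  case (less m)
  let ?k = "card (col ` V)"
  have finF: "finite F" using less.prems(2) fe by (rule finite_subset)
  have finR: "finite R" using less.prems(3) fin by (rule finite_subset)
  show ?case
  proof (cases "V - R = {}")
    case False
    then obtain y where y: "y \<in> V" "y \<notin> R" by blast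
    obtain a b where ab: "a \<in> R" "b \<in> V" "b \<notin> R" "{a,b} \<in> E"
      using ICAC_cross[OF icac sV y(1) less.prems(4) y(2)] by blast
    have isob: "isol F b" using less.prems(5) ab by blast
    have aV: "a \<in> V" using ab less.prems(3) by blast
    have neq: "a \<noteq> b" using ab by blast
    have notin: "{a,b} \<notin> F" using isob by (auto simp: isol_def)
    let ?F' = "insert {a,b} F" and ?R' = "insert b R"
    have cF: "card ?F' = card F + 1" using finF notin by simp
    have cR: "card ?R' = card R + 1" using finR ab by simp
    have stp: "Sk V ?F' col + (?k - 1) \<le> Sk V F col" using Sk_step_iso[OF fin isob aV ab(2) neq] .
    then have lt: "Sk V ?F' col < m" using k2 less.prems(1) by linarith
    have inv: "\<forall>y\<in>V-?R'. isol ?F' y"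
    proof
      fix z assume z: "z \<in> V - ?R'"
      then have "isol F z" using less.prems(5) by blast
      moreover have "z \<noteq> a" "z \<noteq> b" using z ab(1) by auto
      ultimately show "isol ?F' z" unfolding isol_def by simp
    qed
    have bnd: "card ?F' + Sk V ?F' col + (?k - 2) * card ?R' \<le> B"
    proof -
      have "(?k - 2) * card ?R' = (?k - 2) * card R + (?k - 2)" using cR by simp
      then show ?thesis using cF stp less.prems(6) k2 by linarith
    qed
    have a1: "?F' \<subseteq> E" using less.prems(2) ab(4) by blast
    have a2: "?R' \<subseteq> V" using less.prems(3) ab(2) by blast
    have a3: "s \<in> ?R'" using less.prems(4) by blast
    show ?thesis by (rule less.IH[OF lt refl a1 a2 a3 inv bnd])
  next
    case True
    then have RV: "R = V" using less.prems(3) by blast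
    show ?thesis
    proof (cases "int_vertex_color_avoiding_connected V F col")
      case True
      have "?k \<le> Sk V F col" using Sk_lower[OF fin] Wc_ne[OF k2] by blast
      then have "card F + ?k + (?k - 2) * card V \<le> B" using less.prems(6) unfolding RV by linarith
      then show ?thesis using True less.prems(2) by blast
    next
      case False
      have "\<not> (\<forall>c\<in>col ` V. (\<forall>p\<in>Wc V col c. \<forall>q\<in>Wc V col c. (adjp F (Wc V col c))\<^sup>*\<^sup>* p q) \<and> lackset V F col c = {})"
      proof
        assume "\<forall>c\<in>col ` V. (\<forall>p\<in>Wc V col c. \<forall>q\<in>Wc V col c. (adjp F (Wc V col c))\<^sup>*\<^sup>* p q) \<and> lackset V F col c = {}"
        then have "int_vertex_color_avoiding_connected V F col" by (intro ICAC_suff) blast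
        then show False using False by contradiction
      qed
      then obtain c where c: "c \<in> col ` V" and
        bad: "\<not> ((\<forall>p\<in>Wc V col c. \<forall>q\<in>Wc V col c. (adjp F (Wc V col c))\<^sup>*\<^sup>* p q) \<and> lackset V F col c = {})"
        by blast
      obtain x y where xy: "{x,y} \<in> E" "{x,y} \<notin> F" "kap V (insert {x,y} F) col c < kap V F col c"
      proof (cases "\<forall>p\<in>Wc V col c. \<forall>q\<in>Wc V col c. (adjp F (Wc V col c))\<^sup>*\<^sup>* p q")
        case False
        then obtain p q where "p \<in> Wc V col c" "q \<in> Wc V col c" "\<not> (adjp F (Wc V col c))\<^sup>*\<^sup>* p q" by blast
        then obtain x y where xy: "x \<in> Wc V col c" "y \<in> Wc V col c" "{x,y} \<in> E" "\<not> (adjp F (Wc V col c))\<^sup>*\<^sup>* x y"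
          using caseB_a[OF icac c] by blast
        have "{x,y} \<notin> F" using xy by (auto simp: adjp_def)
        moreover have "kap V (insert {x,y} F) col c < kap V F col c"
          using xy by (intro kap_strict_a[OF fin]) auto
        ultimately show ?thesis using that xy by blast
      next
        case True
        then obtain x where x: "x \<in> lackset V F col c" using bad by blast
        obtain w where w: "w \<in> Wc V col c" using Wc_ne[OF k2 c] by blast
        have xV: "x \<in> V" "col x = c" using x by (auto simp: lackset_def)
        obtain y where y: "y \<in> V" "col y \<noteq> c" "{x,y} \<in> E"
          using ICAC_nbr[OF icac xV(1), of w] w xV by (auto simp: Wc_def)
        have "{x,y} \<notin> F" using x y by (auto simp: lackset_def)
        moreover have "kap V (insert {x,y} F) col c < kap V F col c"
          using x y by (intro kap_strict_b[OF fin]) auto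
        ultimately show ?thesis using that y by blast
      qed
      let ?F' = "insert {x,y} F"
      have cF: "card ?F' = card F + 1" using finF xy by simp
      have lt: "Sk V ?F' col < Sk V F col" using Sk_strict[OF fin _ c xy(3)] by blast
      have bnd: "card ?F' + Sk V ?F' col + (?k - 2) * card R \<le> B" using cF lt less.prems(6) by linarith
      have a1: "?F' \<subseteq> E" using less.prems(2) xy(1) by blast
      have a2: "\<forall>y\<in>V-R. isol ?F' y" using RV by blast
      have lt2: "Sk V ?F' col < m" using lt less.prems(1) by simp
      show ?thesis by (rule less.IH[OF lt2 refl a1 less.prems(3,4) a2 bnd])
    qed
  qed
qed

lemma bound_k2:
  assumes sg: "simple_graph V E" and mi: "minimal_ICAC V E col" and k2: "2 \<le> card (col ` V)"
  shows "card E \<le> 2 * card V - 3"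
proof -
  have fin: "finite V" using sg by (simp add: simple_graph_def)
  have "E \<subseteq> Pow V" using sg by (auto simp: simple_graph_def)
  then have fe: "finite E" using fin by (meson finite_Pow_iff finite_subset)
  have icac: "int_vertex_color_avoiding_connected V E col" using mi by (simp add: minimal_ICAC_def)
  let ?k = "card (col ` V)" and ?n = "card V"
  have kn: "?k \<le> ?n" using fin by (rule card_image_le)
  have "V \<noteq> {}" using k2 by auto
  then obtain s where sV: "s \<in> V" by blast
  obtain w where w: "w \<in> Wc V col (col s)" using Wc_ne[OF k2, of "col s"] sV by blast
  obtain t where t: "t \<in> V" "col t \<noteq> col s" "{s,t} \<in> E"
    using ICAC_nbr[OF icac sV, of w] w by (auto simp: Wc_def)
  have st: "s \<noteq> t" using t by auto
  have S1: "Sk V {{s,t}} col + ?k \<le> ?k * ?n"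
  proof -
    have "Sk V {{s,t}} col + ?k \<le> Sk V {} col" using Sk_first[OF fin sV t(1), of col] t(2) by simp
    then show ?thesis using Sk_empty[OF fin, of col] by linarith
  qed
  have c1: "card {{s,t}} = 1" by simp
  have c2: "card {s,t} = 2" using st by simp
  have isoR: "\<forall>y\<in>V - {s,t}. isol {{s,t}} y" by (auto simp: isol_def)
  have bnd: "card {{s,t}} + Sk V {{s,t}} col + (?k - 2) * card {s,t} \<le> ?k * ?n + ?k - 3"
    using S1 k2 unfolding c1 c2 by linarith
  obtain F' where F': "F' \<subseteq> E" "int_vertex_color_avoiding_connected V F' col"
    "card F' + ?k + (?k - 2) * ?n \<le> ?k * ?n + ?k - 3"
    using main_ind[OF fin fe icac k2 sV refl _ _ _ isoR bnd] t(1,3) sV by blast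
  have "?k * ?n = (?k - 2) * ?n + 2 * ?n"
    using k2 by (metis add_mult_distrib le_add_diff_inverse2)
  then have cF: "card F' \<le> 2 * ?n - 3" using F'(3) k2 kn by linarith
  have "E \<subseteq> F'"
  proof
    fix e assume e: "e \<in> E"
    show "e \<in> F'"
    proof (rule ccontr)
      assume "e \<notin> F'"
      then have "F' \<subseteq> E - {e}" using F'(1) by blast
      then have "int_vertex_color_avoiding_connected V (E - {e}) col" using ICAC_mono F'(2) by blast
      then show False using mi e by (simp add: minimal_ICAC_def)
    qed
  qed
  then have "card E \<le> card F'" using fe F'(1) by (metis card_mono finite_subset)
  then show ?thesis using cF by linarith
qed

lemma k1:
  assumes sg: "simple_graph V E" and icac: "int_vertex_color_avoiding_connected V E col"
    and k1: "card (col ` V) = 1"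
  shows "card E = card V choose 2"
proof -
  have fin: "finite V" using sg by (simp add: simple_graph_def)
  obtain c0 where c0: "col ` V = {c0}" using k1 card_1_singletonE by blast
  have allc: "\<And>z. z \<in> V \<Longrightarrow> col z = c0" using c0 by blast
  have "E = {B. B \<subseteq> V \<and> card B = 2}"
  proof
    show "E \<subseteq> {B. B \<subseteq> V \<and> card B = 2}" using sg by (auto simp: simple_graph_def)
  next
    show "{B. B \<subseteq> V \<and> card B = 2} \<subseteq> E"
    proof
      fix B assume "B \<in> {B. B \<subseteq> V \<and> card B = 2}"
      then have B: "B \<subseteq> V" "card B = 2" by auto
      then obtain u v where uv: "B = {u,v}" "u \<noteq> v" by (meson card_2_iff)
      have uV: "u \<in> V" "v \<in> V" using B uv by auto
      have "col u \<in> col ` V" using uV by blast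
      then obtain p where p: "is_path V E p u v" "\<forall>z\<in>internal_vertices p. col z \<noteq> col u"
        using icac uV unfolding int_vertex_color_avoiding_connected_def int_vertex_avoiding_conn_def by blast
      have ie: "internal_vertices p = {}"
      proof -
        have "internal_vertices p \<subseteq> V" using internal_sub[of p] p(1) unfolding is_path_def by blast
        then show ?thesis using p(2) allc uV by blast
      qed
      obtain t where pt: "p = u # t" using p(1) unfolding is_path_def by (cases p) auto
      have "t \<noteq> []" using p(1) pt uv unfolding is_path_def by auto
      then obtain y rest where t: "t = y # rest" by (cases t) auto
      have "rest = []"
      proof (rule ccontr)
        assume "rest \<noteq> []"
        then have "y \<in> internal_vertices p" using pt t by (simp add: internal_vertices_def)
        then show False using ie by simp
      qed
      then have py: "p = [u,y]" using pt t by simp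
      then have "y = v" using p(1) unfolding is_path_def by simp
      have "{p!0, p!Suc 0} \<in> E" using p(1) py unfolding is_path_def by auto
      then show "B \<in> E" using py \<open>y = v\<close> uv by simp
    qed
  qed
  then show ?thesis using n_subsets[OF fin] by simp
qed

definition bookE :: "nat \<Rightarrow> nat set set" where
  "bookE n = insert {0,1} ((\<lambda>j. {0,j}) ` {2..<n} \<union> (\<lambda>j. {1,j}) ` {2..<n})"

lemma book_E1:
  assumes "2 \<le> n" "x < n" "y < n" "x \<noteq> y" "x \<le> 1 \<or> y \<le> 1"
  shows "{x,y} \<in> bookE n"
proof -
  have "x = 0 \<and> y = 1 \<or> x = 1 \<and> y = 0 \<or> (x \<le> 1 \<and> 2 \<le> y) \<or> (y \<le> 1 \<and> 2 \<le> x)" using assms by auto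
  then show ?thesis
  proof (elim disjE)
    assume "x = 0 \<and> y = 1" then show ?thesis by (simp add: bookE_def)
  next
    assume "x = 1 \<and> y = 0" then show ?thesis by (simp add: bookE_def insert_commute)
  next
    assume h: "x \<le> 1 \<and> 2 \<le> y"
    then have "x = 0 \<or> x = 1" by auto
    then show ?thesis using h assms by (auto simp: bookE_def)
  next
    assume h: "y \<le> 1 \<and> 2 \<le> x"
    then have "y = 0 \<or> y = 1" by auto
    then show ?thesis using h assms by (auto simp: bookE_def insert_commute)
  qed
qed

lemma book_E3:
  assumes "e \<in> bookE n"
  shows "e = {0,1} \<or> (\<exists>h j. h \<le> 1 \<and> 2 \<le> j \<and> j < n \<and> e = {h,j})"
proof -
  have "e = {0,1} \<or> (\<exists>j\<in>{2..<n}. e = {0,j}) \<or> (\<exists>j\<in>{2..<n}. e = {1,j})"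
    using assms unfolding bookE_def by blast
  then show ?thesis
  proof (elim disjE bexE)
    fix j assume "j \<in> {2..<n}" "e = {0,j}"
    then show ?thesis by (intro disjI2 exI[of _ 0] exI[of _ j]) auto
  next
    fix j assume "j \<in> {2..<n}" "e = {1,j}"
    then show ?thesis by (intro disjI2 exI[of _ 1] exI[of _ j]) auto
  qed simp
qed

lemma book_E2:
  assumes "{j,z} \<in> bookE n" "2 \<le> j"
  shows "z \<le> 1"
proof -
  have "{j,z} = {0,1} \<or> (\<exists>i. {j,z} = {0,i}) \<or> (\<exists>i. {j,z} = {1,i})"
    using assms(1) unfolding bookE_def by blast
  then show ?thesis using assms(2) by (elim disjE exE) (auto simp: doubleton_eq_iff)
qed

lemma book_sg:
  assumes "2 \<le> n"
  shows "simple_graph {..<n} (bookE n)"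
proof -
  have "\<forall>e\<in>bookE n. e \<subseteq> {..<n} \<and> card e = 2"
  proof
    fix e assume "e \<in> bookE n"
    then show "e \<subseteq> {..<n} \<and> card e = 2" using book_E3[of e n] assms by auto
  qed
  then show ?thesis by (simp add: simple_graph_def)
qed

lemma book_card:
  assumes "2 \<le> n"
  shows "card (bookE n) = 2 * n - 3"
proof -
  let ?A = "(\<lambda>j. {0,j}) ` {2..<n}" and ?B = "(\<lambda>j. {1::nat,j}) ` {2..<n}"
  have cA: "card ?A = n - 2" by (subst card_image) (auto simp: inj_on_def doubleton_eq_iff)
  have cB: "card ?B = n - 2" by (subst card_image) (auto simp: inj_on_def doubleton_eq_iff)
  have dj: "?A \<inter> ?B = {}"
  proof (rule ccontr)
    assume "?A \<inter> ?B \<noteq> {}"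
    then obtain i j where "i \<in> {2..<n}" "j \<in> {2..<n}" "{0::nat,i} = {1,j}" by blast
    then show False by (auto simp: doubleton_eq_iff)
  qed
  have "card (?A \<union> ?B) = 2 * (n - 2)" using cA cB dj by (simp add: card_Un_disjoint)
  moreover have "{0,1} \<notin> ?A \<union> ?B"
  proof
    assume "{0,1} \<in> ?A \<union> ?B"
    then obtain i where "i \<in> {2..<n}" "{0::nat,1} = {0,i} \<or> {0::nat,1} = {1,i}" by blast
    then show False by (auto simp: doubleton_eq_iff)
  qed
  ultimately have "card (bookE n) = 2 * (n - 2) + 1" unfolding bookE_def by simp
  then show ?thesis using assms by simp
qed

lemma book_icac:
  assumes n: "2 \<le> n" and c01: "col 0 \<noteq> col 1"
  shows "int_vertex_color_avoiding_connected {..<n} (bookE n) col"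
  unfolding int_vertex_color_avoiding_connected_def int_vertex_avoiding_conn_def
proof (intro ballI)
  fix c u v assume c: "c \<in> col ` {..<n}" and u: "u \<in> {..<n}" and v: "v \<in> {..<n}"
  show "\<exists>p. is_path {..<n} (bookE n) p u v \<and> (\<forall>w\<in>internal_vertices p. col w \<noteq> c)"
  proof (cases "u = v")
    case True
    then show ?thesis using u by (intro exI[of _ "[u]"]) (simp add: is_path_def internal_vertices_def)
  next
    case False
    show ?thesis
    proof (cases "u \<le> 1 \<or> v \<le> 1")
      case True
      then have "{u,v} \<in> bookE n" using book_E1 n u v False by auto
      then show ?thesis using u v False
        by (intro exI[of _ "[u,v]"]) (simp add: is_path_succ internal_vertices_def)
    next
      case uv2: False
      define h where "h = (if col 0 \<noteq> c then (0::nat) else 1)"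
      have hc: "col h \<noteq> c" using c01 by (auto simp: h_def)
      have h1: "h \<le> 1" by (simp add: h_def)
      have e1: "{u,h} \<in> bookE n" using book_E1[OF n, of u h] u uv2 h1 n by auto
      have e2: "{h,v} \<in> bookE n" using book_E1[OF n, of h v] v uv2 h1 n by auto
      have "is_path {..<n} (bookE n) [u,h,v] u v"
        using e1 e2 u v uv2 h1 False n by (simp add: is_path_succ)
      moreover have "internal_vertices [u,h,v] = {h}" by (simp add: internal_vertices_def)
      ultimately show ?thesis using hc by (intro exI[of _ "[u,h,v]"]) simp
    qed
  qed
qed

lemma path_start:
  assumes "is_path V E p u v" "u \<noteq> v"
  obtains y rest where "p = u # y # rest" "{u,y} \<in> E" "y \<in> V"
    "rest = [] \<Longrightarrow> y = v" "rest \<noteq> [] \<Longrightarrow> y \<in> internal_vertices p" "y \<noteq> u"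
    "rest \<noteq> [] \<Longrightarrow> y \<noteq> v"
proof -
  obtain t where p: "p = u # t" using assms unfolding is_path_def by (cases p) auto
  have "t \<noteq> []" using assms p unfolding is_path_def by auto
  then obtain y rest where t: "t = y # rest" by (cases t) auto
  have "Suc 0 < length p" using p t by simp
  then have "{p!0, p!Suc 0} \<in> E" using assms(1) unfolding is_path_def by blast
  then have e: "{u,y} \<in> E" using p t by simp
  have yV: "y \<in> V" using assms p t unfolding is_path_def by auto
  have d: "distinct (u # y # rest)" using assms p t unfolding is_path_def by simp
  have l: "last (u # y # rest) = v" using assms p t unfolding is_path_def by simp
  have a: "rest = [] \<Longrightarrow> y = v" using l by simp
  have b: "rest \<noteq> [] \<Longrightarrow> y \<in> internal_vertices p" using p t by (simp add: internal_vertices_def)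
  have c: "rest \<noteq> [] \<Longrightarrow> y \<noteq> v"
  proof -
    assume r: "rest \<noteq> []"
    have "last rest = v" using l r by simp
    then have "v \<in> set rest" using last_in_set[OF r] by simp
    then show "y \<noteq> v" using d by auto
  qed
  have yu: "y \<noteq> u" using d by auto
  have pe: "p = u # y # rest" using p t by simp
  show ?thesis
    apply (rule that[of y rest])
    using pe e yV a b c yu by auto
qed

lemma book_minimal:
  assumes n: "2 \<le> n" and c01: "col 0 \<noteq> col 1" and cd: "\<And>j. 2 \<le> j \<Longrightarrow> col j = d"
    and dV: "d \<in> col ` {..<n}"
  shows "minimal_ICAC {..<n} (bookE n) col"
  unfolding minimal_ICAC_def
proof (intro conjI ballI)
  show "int_vertex_color_avoiding_connected {..<n} (bookE n) col" using book_icac[OF n c01] .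
next
  fix e assume e: "e \<in> bookE n"
  show "\<not> int_vertex_color_avoiding_connected {..<n} (bookE n - {e}) col"
  proof
    assume ic: "int_vertex_color_avoiding_connected {..<n} (bookE n - {e}) col"
    from book_E3[OF e] show False
    proof (elim disjE exE conjE)
      assume e01: "e = {0,1}"
      have "int_vertex_avoiding_conn {..<n} (bookE n - {e}) col d 0 1"
        using ic[unfolded int_vertex_color_avoiding_connected_def, rule_format, OF dV, of 0 1] n by simp
      then obtain p where p: "is_path {..<n} (bookE n - {e}) p 0 1" "\<forall>w\<in>internal_vertices p. col w \<noteq> d"
        unfolding int_vertex_avoiding_conn_def by blast
      have n01: "(0::nat) \<noteq> 1" by simp
      obtain y rest where pr: "p = 0 # y # rest" "{0,y} \<in> bookE n - {e}" "y \<in> {..<n}"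
        "rest = [] \<Longrightarrow> y = 1" "rest \<noteq> [] \<Longrightarrow> y \<in> internal_vertices p" "y \<noteq> 0"
        "rest \<noteq> [] \<Longrightarrow> y \<noteq> 1"
        by (rule path_start[OF p(1) n01]) blast
      show False
      proof (cases "rest = []")
        case True then show False using pr e01 by simp
      next
        case False
        then have "2 \<le> y" using pr by auto
        then show False using pr(5)[OF False] p(2) cd by auto
      qed
    next
      fix h j assume hj: "h \<le> 1" "2 \<le> j" "j < n" "e = {h,j}"
      define h' where "h' = 1 - h"
      have h01: "h = 0 \<or> h = 1" using hj by auto
      have h'n: "h' < n" "h' \<le> 1" "h' \<noteq> h" using h01 n by (auto simp: h'_def)
      have hn: "h < n" using hj n by auto
      have ch': "col h' \<in> col ` {..<n}" using h'n by simp
      have "int_vertex_avoiding_conn {..<n} (bookE n - {e}) col (col h') j h"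
        using ic[unfolded int_vertex_color_avoiding_connected_def, rule_format, OF ch', of j h] hn hj by simp
      then obtain p where p: "is_path {..<n} (bookE n - {e}) p j h" "\<forall>w\<in>internal_vertices p. col w \<noteq> col h'"
        unfolding int_vertex_avoiding_conn_def by blast
      have jh: "j \<noteq> h" using hj by auto
      obtain y rest where pr: "p = j # y # rest" "{j,y} \<in> bookE n - {e}" "y \<in> {..<n}"
        "rest = [] \<Longrightarrow> y = h" "rest \<noteq> [] \<Longrightarrow> y \<in> internal_vertices p" "y \<noteq> j"
        "rest \<noteq> [] \<Longrightarrow> y \<noteq> h"
        by (rule path_start[OF p(1) jh]) blast
      have "y \<le> 1" using book_E2[of j y n] pr(2) hj by auto
      moreover have "y \<noteq> h" using pr(2) hj by (auto simp: insert_commute)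
      ultimately have yh': "y = h'" using h01 by (auto simp: h'_def)
      show False
      proof (cases "rest = []")
        case True then show False using pr(4) \<open>y \<noteq> h\<close> by simp
      next
        case False then show False using pr(5) p(2) yh' by auto
      qed
    qed
  qed
qed

lemma constr2:
  assumes n: "2 \<le> n"
  shows "\<exists>(V :: nat set) (E :: nat set set) (col :: nat \<Rightarrow> nat).
            simple_graph V E \<and> card V = n \<and> minimal_ICAC V E col \<and> card (col ` V) = 2 \<and>
            card E = 2 * n - 3"
proof -
  define col :: "nat \<Rightarrow> nat" where "col = (\<lambda>v. if v = 1 then 1 else 0)"
  have img: "col ` {..<n} = {0,1}"
  proof
    show "col ` {..<n} \<subseteq> {0,1}" by (auto simp: col_def)
    have "col 0 = 0" "col 1 = 1" "0 < n" "1 < n" using n by (auto simp: col_def)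
    then show "{0,1} \<subseteq> col ` {..<n}" by (metis empty_subsetI insert_subset image_eqI lessThan_iff)
  qed
  have m: "minimal_ICAC {..<n} (bookE n) col"
  proof (rule book_minimal[OF n, of col 0])
    show "col 0 \<noteq> col 1" by (simp add: col_def)
    show "\<And>j. 2 \<le> j \<Longrightarrow> col j = 0" by (simp add: col_def)
    show "0 \<in> col ` {..<n}" using img by simp
  qed
  show ?thesis
    by (intro exI[of _ "{..<n}"] exI[of _ "bookE n"] exI[of _ col])
      (simp add: book_sg[OF n] m img book_card[OF n])
qed

lemma constr3:
  assumes n: "3 \<le> n"
  shows "\<exists>(V :: nat set) (E :: nat set set) (col :: nat \<Rightarrow> nat).
            simple_graph V E \<and> card V = n \<and> minimal_ICAC V E col \<and> card (col ` V) = 3 \<and>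
            card E = 2 * n - 3"
proof -
  have n2: "2 \<le> n" using n by simp
  define col :: "nat \<Rightarrow> nat" where "col = (\<lambda>v. if v = 0 then 1 else if v = 1 then 2 else 0)"
  have img: "col ` {..<n} = {0,1,2}"
  proof
    show "col ` {..<n} \<subseteq> {0,1,2}" by (auto simp: col_def)
    have "col 2 = 0" "col 0 = 1" "col 1 = 2" "0 < n" "1 < n" "2 < n" using n by (auto simp: col_def)
    then show "{0,1,2} \<subseteq> col ` {..<n}" by (metis empty_subsetI insert_subset image_eqI lessThan_iff)
  qed
  have m: "minimal_ICAC {..<n} (bookE n) col"
  proof (rule book_minimal[OF n2, of col 0])
    show "col 0 \<noteq> col 1" by (simp add: col_def)
    show "\<And>j. 2 \<le> j \<Longrightarrow> col j = 0" by (simp add: col_def)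
    show "0 \<in> col ` {..<n}" using img by simp
  qed
  show ?thesis
    by (intro exI[of _ "{..<n}"] exI[of _ "bookE n"] exI[of _ col])
      (simp add: book_sg[OF n2] m img book_card[OF n2])
qed

theorem corollary3p18:
  shows "(\<forall>(V :: 'a set) (E :: 'a set set) (col :: 'a \<Rightarrow> 'b) k.
            simple_graph V E \<and> minimal_ICAC V E col \<and> card (col ` V) = k \<longrightarrow>
              (k = 1 \<longrightarrow> card E = card V choose 2) \<and>
              (k \<ge> 2 \<longrightarrow> card E \<le> 2 * card V - 3))
       \<and> (\<forall>k \<in> {2, 3}. \<forall>n \<ge> k. \<exists>(V :: nat set) (E :: nat set set) (col :: nat \<Rightarrow> nat).
            simple_graph V E \<and> card V = n \<and> minimal_ICAC V E col \<and> card (col ` V) = k \<and>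
            card E = 2 * n - 3)"
proof (intro conjI allI impI ballI)
  fix V :: "'a set" and E :: "'a set set" and col :: "'a \<Rightarrow> 'b" and k
  assume h: "simple_graph V E \<and> minimal_ICAC V E col \<and> card (col ` V) = k"
  show "k = 1 \<Longrightarrow> card E = card V choose 2"
    using k1[of V E col] h by (simp add: minimal_ICAC_def)
  show "2 \<le> k \<Longrightarrow> card E \<le> 2 * card V - 3"
    using bound_k2[of V E col] h by simp
next
  fix k n :: nat assume k: "k \<in> {2,3}" and n: "k \<le> n"
  show "\<exists>(V :: nat set) (E :: nat set set) (col :: nat \<Rightarrow> nat).
            simple_graph V E \<and> card V = n \<and> minimal_ICAC V E col \<and> card (col ` V) = k \<and>
            card E = 2 * n - 3"
    using k n constr2[of n] constr3[of n] by auto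
qed

end
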